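(* Let $p_0<1$. For each $n$ let $(C_{n,i})_{i\ge1}$ be independent events with $P(C_{n,i})\le p_0$ for all $i$. Suppose there is a random variable $M^*$ with values in $\{0,1,2,\dots;\infty\}$ such that $\sum_i\mathbf 1_{C_{n,i}}\to M^*$ in distribution on $\{0,1,2,\dots;\infty\}$ (with its one-point compactification topology) as $n\to\infty$. Then either $P(M^*=0)>0$ or $P(M^*=\infty)=1$. *)

theory Defs
  imports "HOL-Probability.Probability"
begin

text \<open>Number of events among C 0, C 1, ... that occur at outcome w, as an element of
  {0,1,2,...} \<union> {\<infinity>} (type enat); this is the sum of the indicators.\<close>
definition count_events :: "(nat \<Rightarrow> 'a set) \<Rightarrow> 'a \<Rightarrow> enat" where
  "count_events C w =
     (if finite {i. w \<in> C i} then enat (card {i. w \<in> C i}) else \<infinity>)"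

text \<open>Convergence in distribution of random variables S n (on probability spaces M n)
  to X (on probability space N), all with values in enat, where enat carries its order
  topology, i.e. the one-point compactification of the discrete space of naturals:
  expectations of every bounded continuous real function converge (continuous
  functions on this compact space are automatically bounded).\<close>
definition conv_distr_enat ::
  "(nat \<Rightarrow> 'a measure) \<Rightarrow> (nat \<Rightarrow> 'a \<Rightarrow> enat) \<Rightarrow> 'b measure \<Rightarrow> ('b \<Rightarrow> enat) \<Rightarrow> bool" where
  "conv_distr_enat M S N X \<longleftrightarrow>
     (\<forall>f :: enat \<Rightarrow> real. continuous_on UNIV f \<longrightarrow> bounded (range f) \<longrightarrow>
        (\<lambda>n. \<integral>w. f (S n w) \<partial>M n) \<longlonglongrightarrow> (\<integral>w. f (X w) \<partial>N))"

end

theory Submission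
  imports Defs
begin

lemma prod_indicator_Inter:
  assumes "finite X"
  shows "(\<Prod>i\<in>X. indicator (C i) w :: real) = indicator (\<Inter>i\<in>X. C i) w"
  using assms by (induction X rule: finite_induct) (auto simp: indicator_def)

lemma (in prob_space) indep_prod_expand:
  assumes ind: "indep_events C UNIV" and fin: "finite A"
  shows "(\<integral>w. (\<Prod>i\<in>A. 1 - s * indicator (C i) w) \<partial>M) = (\<Prod>i\<in>A. 1 - s * prob (C i))"
proof -
  have Cev: "C i \<in> events" for i using ind by (auto simp: indep_events_def)
  have eqw: "(\<Prod>i\<in>A. 1 - s * indicator (C i) w) =
     (\<Sum>X\<in>Pow A. (-s)^card X * indicator (space M \<inter> (\<Inter>i\<in>X. C i)) w)"
    if w: "w \<in> space M" for w
  proof -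
    have "(\<Prod>i\<in>A. 1 - s * indicator (C i) w) = (\<Prod>i\<in>A. (-s) * indicator (C i) w + 1)" by simp
    also have "\<dots> = (\<Sum>X\<in>Pow A. (\<Prod>i\<in>X. (-s) * indicator (C i) w) * (\<Prod>i\<in>A-X. 1))"
      by (rule prod_add[OF fin])
    also have "\<dots> = (\<Sum>X\<in>Pow A. (-s)^card X * indicator (space M \<inter> (\<Inter>i\<in>X. C i)) w)"
    proof (rule sum.cong[OF refl])
      fix X assume "X \<in> Pow A"
      then have "finite X" using fin finite_subset by auto
      then show "(\<Prod>i\<in>X. (-s) * indicator (C i) w) * (\<Prod>i\<in>A-X. 1) =
          (-s)^card X * indicator (space M \<inter> (\<Inter>i\<in>X. C i)) w"
        using w by (auto simp add: prod.distrib prod_indicator_Inter indicator_def)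
    qed
    finally show ?thesis .
  qed
  have inter_eq: "space M \<inter> (\<Inter>i\<in>X. C i) = (\<Inter>i\<in>X. C i)" if "X \<noteq> {}" for X
    using that Cev sets.sets_into_space by blast
  have sets: "space M \<inter> (\<Inter>i\<in>X. C i) \<in> events" if "finite X" for X
  proof (cases "X = {}")
    case True then show ?thesis by simp
  next
    case False
    then show ?thesis using inter_eq[OF False] that Cev by (auto intro: sets.finite_INT)
  qed
  have pr: "prob (space M \<inter> (\<Inter>i\<in>X. C i)) = (\<Prod>i\<in>X. prob (C i))" if "finite X" for X
  proof (cases "X = {}")
    case True then show ?thesis by (simp add: prob_space)
  next
    case False
    then show ?thesis using inter_eq[OF False] ind that by (auto simp: indep_events_def)
  qed
  have "(\<integral>w. (\<Prod>i\<in>A. 1 - s * indicator (C i) w) \<partial>M) =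
      (\<integral>w. (\<Sum>X\<in>Pow A. (-s)^card X * indicator (space M \<inter> (\<Inter>i\<in>X. C i)) w) \<partial>M)"
    by (rule Bochner_Integration.integral_cong[OF refl]) (simp add: eqw)
  also have "\<dots> = (\<Sum>X\<in>Pow A. (\<integral>w. (-s)^card X * indicator (space M \<inter> (\<Inter>i\<in>X. C i)) w \<partial>M))"
  proof (rule Bochner_Integration.integral_sum)
    fix X assume "X \<in> Pow A"
    then have "finite X" using fin finite_subset by auto
    then show "integrable M (\<lambda>w. (-s)^card X * indicator (space M \<inter> (\<Inter>i\<in>X. C i)) w :: real)"
      using sets by (intro integrable_mult_right integrable_real_indicator) (auto simp: emeasure_eq_measure)
  qed
  also have "\<dots> = (\<Sum>X\<in>Pow A. (\<Prod>i\<in>X. -s * prob (C i)) * (\<Prod>i\<in>A-X. 1))"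
  proof (rule sum.cong[OF refl])
    fix X assume "X \<in> Pow A"
    then have "finite X" using fin finite_subset by auto
    then show "(\<integral>w. (-s)^card X * indicator (space M \<inter> (\<Inter>i\<in>X. C i)) w \<partial>M) =
        (\<Prod>i\<in>X. -s * prob (C i)) * (\<Prod>i\<in>A-X. 1)"
    proof -
      have e1: "space M \<inter> (\<Inter>i\<in>X. C i) \<inter> space M = space M \<inter> (\<Inter>i\<in>X. C i)" by blast
      have e2: "(\<Prod>i\<in>X. -s * prob (C i)) = (\<Prod>i\<in>X. -s) * (\<Prod>i\<in>X. prob (C i))"
        by (rule prod.distrib)
      show ?thesis using pr[OF \<open>finite X\<close>] unfolding e2 by (simp add: e1)
    qed
  qed
  also have "\<dots> = (\<Prod>i\<in>A. -s * prob (C i) + 1)" by (rule prod_add[OF fin, symmetric])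
  finally show ?thesis by simp
qed


lemma (in prob_space) count_events_set:
  assumes Cev: "\<And>i. C i \<in> events"
  shows "{w\<in>space M. count_events C w = enat k} \<in> events"
proof -
  have eq: "count_events C w = enat k \<longleftrightarrow>
     (\<exists>m::nat. (\<Sum>i<m. indicator (C i) w :: real) = real k \<and> (\<forall>j\<in>{m..}. w \<notin> C j))" for w
  proof -
    have sumeq: "(\<Sum>i<m. indicator (C i) w :: real) = real (card ({..<m} \<inter> {i. w \<in> C i}))" for m
    proof -
      have "(\<Sum>i<m. indicator (C i) w :: real) = (\<Sum>i<m. indicator {i. w \<in> C i} i)"
        by (simp add: indicator_def)
      also have "\<dots> = (\<Sum>i\<in>{..<m}. if i \<in> {i. w \<in> C i} then 1 else 0)"
        by (intro sum.cong) (auto simp: indicator_def)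
      also have "\<dots> = (\<Sum>i\<in>{..<m} \<inter> {i. w \<in> C i}. 1)"
        by (rule sum.inter_restrict[symmetric]) (rule finite_lessThan)
      also have "\<dots> = real (card ({..<m} \<inter> {i. w \<in> C i}))" by simp
      finally show ?thesis .
    qed
    show ?thesis
    proof
      assume h: "count_events C w = enat k"
      then have fin: "finite {i. w \<in> C i}" and cd: "card {i. w \<in> C i} = k"
        unfolding count_events_def by (auto split: if_splits)
      obtain m where m: "{i. w \<in> C i} \<subseteq> {..<m}"
        using finite_nat_bounded[OF fin] by blast
      have e: "{..<m} \<inter> {i. w \<in> C i} = {i. w \<in> C i}" using m by blast
      have s1: "(\<Sum>i<m. indicator (C i) w :: real) = real k" unfolding sumeq e cd ..
      have s2: "\<forall>j\<in>{m..}. w \<notin> C j" using m by fastforce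
      show "\<exists>m::nat. (\<Sum>i<m. indicator (C i) w :: real) = real k \<and> (\<forall>j\<in>{m..}. w \<notin> C j)"
        using s1 s2 by blast
    next
      assume "\<exists>m::nat. (\<Sum>i<m. indicator (C i) w :: real) = real k \<and> (\<forall>j\<in>{m..}. w \<notin> C j)"
      then obtain m where m1: "(\<Sum>i<m. indicator (C i) w :: real) = real k" and m2: "\<forall>j\<in>{m..}. w \<notin> C j"
        by blast
      have sub: "i < m" if "w \<in> C i" for i using m2 that by (meson atLeast_iff not_le)
      have e: "{..<m} \<inter> {i. w \<in> C i} = {i. w \<in> C i}" using sub by blast
      have "finite {i. w \<in> C i}" by (metis e finite_Int finite_lessThan)
      moreover have "card {i. w \<in> C i} = k" using m1 unfolding sumeq e by simp
      ultimately have "finite {i. w \<in> C i}" "card {i. w \<in> C i} = k" by auto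
      then show "count_events C w = enat k" by (simp add: count_events_def)
    qed
  qed
  note Cev[measurable]
  have "{w\<in>space M. \<exists>m::nat. (\<Sum>i<m. indicator (C i) w :: real) = real k \<and> (\<forall>j\<in>{m..}. w \<notin> C j)} \<in> events"
    by measurable
  then show ?thesis unfolding eq .
qed


lemma count_events_zero: "count_events C w = enat 0 \<longleftrightarrow> (\<forall>i. w \<notin> C i)"
  by (auto simp: count_events_def) (metis (no_types) Collect_empty_eq finite.emptyI)

lemma (in prob_space) key_bound:
  assumes ind: "indep_events C UNIV" and p: "\<And>i. prob (C i) \<le> P"
    and s0: "0 \<le> s" and s1: "s \<le> 1"
    and sq: "\<And>x. 0 \<le> x \<Longrightarrow> x \<le> P \<Longrightarrow> (1 - s * x)^2 \<le> 1 - x"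
  shows "((1-s)^k * prob {w\<in>space M. count_events C w = enat k})^2
           \<le> prob {w\<in>space M. count_events C w = enat 0}"
proof -
  have Cev: "C i \<in> events" for i using ind by (auto simp: indep_events_def)
  note Cev[measurable]
  define t where "t = 1 - s"
  have t0: "0 \<le> t" "t \<le> 1" using s0 s1 by (auto simp: t_def)
  define E where "E = {w\<in>space M. count_events C w = enat k}"
  have Eev: "E \<in> events" unfolding E_def using count_events_set Cev by blast
  define A where "A m = space M - (\<Union>i<m. C i)" for m
  have Aev: "A m \<in> events" for m unfolding A_def using Cev by auto
  have nonneg: "0 \<le> 1 - s * indicator (C i) w" for i w using s1 s0 by (simp add: indicator_def)
  have bnd: "(t^k * prob E)^2 \<le> prob (A m)" for m
  proof -
    have pw: "t^k * indicator E w \<le> (\<Prod>i<m. 1 - s * indicator (C i) w)" if "w \<in> space M" for w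
    proof (cases "w \<in> E")
      case False then show ?thesis using nonneg by (simp add: prod_nonneg)
    next
      case True
      then have fin: "finite {i. w \<in> C i}" and cd: "card {i. w \<in> C i} = k"
        by (auto simp: E_def count_events_def split: if_splits)
      have "(\<Prod>i<m. 1 - s * indicator (C i) w) = (\<Prod>i\<in>{..<m}. if i \<in> {i. w \<in> C i} then t else 1)"
        by (intro prod.cong) (auto simp: indicator_def t_def)
      also have "\<dots> = (\<Prod>i\<in>{..<m} \<inter> {i. w \<in> C i}. t)"
        by (rule prod.inter_restrict[symmetric]) (rule finite_lessThan)
      also have "\<dots> = t ^ card ({..<m} \<inter> {i. w \<in> C i})" by simp
      finally have e: "(\<Prod>i<m. 1 - s * indicator (C i) w) = t ^ card ({..<m} \<inter> {i. w \<in> C i})" .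
      have "card ({..<m} \<inter> {i. w \<in> C i}) \<le> k" using card_mono[OF fin, of "{..<m} \<inter> {i. w \<in> C i}"] cd by auto
      then have "t^k \<le> t ^ card ({..<m} \<inter> {i. w \<in> C i})" by (rule power_decreasing) (use t0 in auto)
      then show ?thesis using True e by simp
    qed
    have int1: "integrable M (\<lambda>w. \<Prod>i<m. 1 - s * indicator (C i) w)"
    proof (rule integrable_const_bound[where B=1])
      show "AE x in M. norm (\<Prod>i<m. 1 - s * indicator (C i) x) \<le> 1"
      proof (rule AE_I2)
        fix x
        have "0 \<le> (\<Prod>i<m. 1 - s * indicator (C i) x)" using nonneg by (simp add: prod_nonneg)
        moreover have "(\<Prod>i<m. 1 - s * indicator (C i) x) \<le> 1"
          using nonneg s0 by (intro prod_le_1) (auto simp: indicator_def)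
        ultimately show "norm (\<Prod>i<m. 1 - s * indicator (C i) x) \<le> 1" by simp
      qed
    qed measurable
    have intE: "integrable M (\<lambda>w. t^k * indicator E w :: real)"
      using Eev by (intro integrable_mult_right integrable_real_indicator) (auto simp: emeasure_eq_measure)
    have "t^k * prob E = (\<integral>w. t^k * indicator E w \<partial>M)"
      using Eev sets.sets_into_space[OF Eev] by (simp add: Int_absorb2)
    also have "\<dots> \<le> (\<integral>w. (\<Prod>i<m. 1 - s * indicator (C i) w) \<partial>M)"
      by (rule integral_mono[OF intE int1 pw])
    also have "\<dots> = (\<Prod>i<m. 1 - s * prob (C i))" by (rule indep_prod_expand[OF ind]) simp
    finally have le1: "t^k * prob E \<le> (\<Prod>i<m. 1 - s * prob (C i))" .
    have ge0: "0 \<le> t^k * prob E" using t0 by simp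
    have "(t^k * prob E)^2 \<le> (\<Prod>i<m. 1 - s * prob (C i))^2" by (rule power_mono[OF le1 ge0])
    also have "\<dots> = (\<Prod>i<m. (1 - s * prob (C i))^2)" by (rule prod_power_distrib)
    also have "\<dots> \<le> (\<Prod>i<m. 1 - prob (C i))" by (rule prod_mono) (auto intro: sq p)
    also have "\<dots> = (\<integral>w. (\<Prod>i<m. 1 - 1 * indicator (C i) w) \<partial>M)"
      using indep_prod_expand[OF ind, of "{..<m}" 1] by simp
    also have "\<dots> = (\<integral>w. indicator (A m) w \<partial>M)"
    proof (rule Bochner_Integration.integral_cong[OF refl])
      fix w assume w: "w \<in> space M"
      have "(\<Prod>i<m. 1 - 1 * indicator (C i) w) = (\<Prod>i<m. indicator (- C i) w :: real)"
        by (intro prod.cong) (auto simp: indicator_def)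
      also have "\<dots> = indicator (\<Inter>i<m. - C i) w" by (rule prod_indicator_Inter) simp
      also have "\<dots> = indicator (A m) w" using w by (auto simp: A_def indicator_def)
      finally show "(\<Prod>i<m. 1 - 1 * indicator (C i) w) = (indicator (A m) w :: real)" .
    qed
    also have "\<dots> = prob (A m)" using Aev sets.sets_into_space[OF Aev] by (simp add: Int_absorb2)
    finally show ?thesis .
  qed
  have lim: "(\<lambda>m. prob (A m)) \<longlonglongrightarrow> prob (\<Inter>m. A m)"
    by (rule finite_Lim_measure_decseq) (auto simp: Aev decseq_def A_def)
  have eqA: "(\<Inter>m. A m) = {w\<in>space M. count_events C w = enat 0}"
    by (auto simp: A_def count_events_zero)
  show ?thesis
    using LIMSEQ_le_const[OF lim] bnd unfolding eqA E_def t_def by blast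
qed


lemma cont_ind: "continuous_on UNIV (indicator {enat k} :: enat \<Rightarrow> real)"
  unfolding continuous_on_topological
proof (intro ballI allI impI)
  fix x :: enat and B :: "real set"
  assume B: "open B" "indicator {enat k} x \<in> B"
  show "\<exists>A. open A \<and> x \<in> A \<and> (\<forall>y\<in>UNIV. y \<in> A \<longrightarrow> indicator {enat k} y \<in> B)"
  proof (cases "x = enat k")
    case True then show ?thesis using B by (intro exI[of _ "{enat k}"]) (auto simp: open_enat)
  next
    case False then show ?thesis using B
      by (intro exI[of _ "- {enat k}"]) (auto simp: indicator_def intro: open_Compl closed_singleton)
  qed
qed

lemma bounded_ind: "bounded (range (indicator {enat k} :: enat \<Rightarrow> real))"
  by (rule finite_imp_bounded) (rule finite_subset[of _ "{0,1}"], auto simp: indicator_def)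

theorem lemma50:
  fixes p0 :: real
    and M :: "nat \<Rightarrow> 'a measure"
    and C :: "nat \<Rightarrow> nat \<Rightarrow> 'a set"
    and N :: "'b measure"
    and Mstar :: "'b \<Rightarrow> enat"
  assumes "p0 < 1"
    and "\<And>n. prob_space (M n)"
    and "\<And>n. prob_space.indep_events (M n) (C n) UNIV"
    and "\<And>n i. measure (M n) (C n i) \<le> p0"
    and "prob_space N"
    and "Mstar \<in> measurable N (count_space UNIV)"
    and "conv_distr_enat M (\<lambda>n. count_events (C n)) N Mstar"
  shows "measure N {w \<in> space N. Mstar w = 0} > 0
         \<or> measure N {w \<in> space N. Mstar w = \<infinity>} = 1"
proof -
  define P where "P = max p0 (1/2)"
  have P0: "0 < P" "P < 1" using assms(1) by (auto simp: P_def)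
  define r where "r = sqrt (1 - P)"
  have r0: "0 < r" using P0 by (simp add: r_def)
  have r2: "r^2 = 1 - P" using P0 by (simp add: r_def)
  define s where "s = 1/(1+r)"
  have s0: "0 \<le> s" "s \<le> 1" using r0 by (auto simp: s_def)
  have t0: "0 < 1 - s" using r0 by (simp add: s_def field_simps)
  have key0: "s^2 * P - 2 * s + 1 = 0"
  proof -
    have Pr: "P = 1 - r^2" using r2 by simp
    have h: "s * (1 + r) = 1" using r0 by (simp add: s_def)
    then have h': "s + s * r = 1" by (simp add: algebra_simps)
    have "s^2 * P = s * (1 - r) * (s * (1 + r))" unfolding Pr by (simp add: power2_eq_square algebra_simps)
    also have "s * (1 - r) * (s * (1 + r)) = s - s * r" unfolding h by (simp add: algebra_simps)
    finally have "s^2 * P = s - s * r" .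
    then show ?thesis using h' by linarith
  qed
  have sq: "(1 - s * x)^2 \<le> 1 - x" if x: "0 \<le> x" "x \<le> P" for x
  proof -
    have e: "(1 - s * x)^2 - (1 - x) = x * (s^2 * x - 2 * s + 1)" by (simp add: algebra_simps power2_eq_square)
    have "s^2 * x \<le> s^2 * P" using x by (intro mult_left_mono) auto
    then have "s^2 * x - 2 * s + 1 \<le> 0" using key0 by linarith
    then have "x * (s^2 * x - 2 * s + 1) \<le> 0" using x by (simp add: mult_nonneg_nonpos)
    then show ?thesis using e by linarith
  qed
  define a where "a n k = measure (M n) {w\<in>space (M n). count_events (C n) w = enat k}" for n k
  define b where "b k = measure N {w\<in>space N. Mstar w = enat k}" for k
  have bound: "((1-s)^k * a n k)^2 \<le> a n 0" for n k
  proof -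
    have pP: "measure (M n) (C n i) \<le> P" for i using assms(4)[of n i] by (auto simp: P_def)
    show ?thesis
      using prob_space.key_bound[OF assms(2) assms(3) pP s0 sq] unfolding a_def by blast
  qed
  have Nk: "{w\<in>space N. Mstar w = enat k} \<in> sets N" for k
  proof -
    have "Mstar -` {enat k} \<inter> space N \<in> sets N" by (rule measurable_sets[OF assms(6)]) simp
    moreover have "Mstar -` {enat k} \<inter> space N = {w\<in>space N. Mstar w = enat k}" by auto
    ultimately show ?thesis by simp
  qed
  have conv: "(\<lambda>n. a n k) \<longlonglongrightarrow> b k" for k
  proof -
    have lim: "(\<lambda>n. \<integral>w. (indicator {enat k} (count_events (C n) w) :: real) \<partial>M n)
        \<longlonglongrightarrow> (\<integral>w. indicator {enat k} (Mstar w) \<partial>N)"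
      using assms(7) cont_ind bounded_ind unfolding conv_distr_enat_def by blast
    have e1: "(\<integral>w. indicator {enat k} (count_events (C n) w) \<partial>M n) = a n k" for n
    proof -
      have "(\<integral>w. indicator {enat k} (count_events (C n) w) \<partial>M n)
          = (\<integral>w. indicator {w\<in>space (M n). count_events (C n) w = enat k} w \<partial>M n)"
        by (rule Bochner_Integration.integral_cong[OF refl]) (auto simp: indicator_def)
      also have "\<dots> = a n k"
      proof -
        have "{w\<in>space (M n). count_events (C n) w = enat k} \<inter> space (M n) = {w\<in>space (M n). count_events (C n) w = enat k}" by blast
        then show ?thesis using Bochner_Integration.integral_indicator[of "M n" "{w\<in>space (M n). count_events (C n) w = enat k}"]
          unfolding a_def by simp
      qed
      finally show ?thesis .
    qed
    have e2: "(\<integral>w. indicator {enat k} (Mstar w) \<partial>N) = b k"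
    proof -
      have "(\<integral>w. indicator {enat k} (Mstar w) \<partial>N)
          = (\<integral>w. indicator {w\<in>space N. Mstar w = enat k} w \<partial>N)"
        by (rule Bochner_Integration.integral_cong[OF refl]) (auto simp: indicator_def)
      also have "\<dots> = b k"
      proof -
        have "{w\<in>space N. Mstar w = enat k} \<inter> space N = {w\<in>space N. Mstar w = enat k}" by blast
        then show ?thesis using Bochner_Integration.integral_indicator[of N "{w\<in>space N. Mstar w = enat k}"]
          unfolding b_def by simp
      qed
      finally show ?thesis .
    qed
    show ?thesis using lim by (simp only: e1 e2)
  qed
  show ?thesis
  proof (cases "b 0 > 0")
    case True then show ?thesis unfolding b_def zero_enat_def by simp
  next
    case False
    moreover have "b 0 \<ge> 0" by (simp add: b_def)
    ultimately have b0: "b 0 = 0" by linarith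
    have bk: "b k = 0" for k
    proof -
      have l1: "(\<lambda>n. ((1-s)^k * a n k)^2) \<longlonglongrightarrow> ((1-s)^k * b k)^2"
        by (intro tendsto_intros conv)
      have "((1-s)^k * b k)^2 \<le> b 0"
        by (rule tendsto_le[OF trivial_limit_sequentially conv l1]) (simp add: bound)
      then have "((1-s)^k * b k)^2 = 0" using b0 by (simp add: order_antisym)
      then show "b k = 0" using t0 by simp
    qed
    interpret N: prob_space N by (rule assms(5))
    have U: "emeasure N (\<Union>k. {w\<in>space N. Mstar w = enat k}) = 0"
      by (rule emeasure_UN_eq_0) (use bk Nk in \<open>auto simp: N.emeasure_eq_measure b_def\<close>)
    have Uev: "(\<Union>k. {w\<in>space N. Mstar w = enat k}) \<in> sets N" using Nk by auto
    have eq: "{w\<in>space N. Mstar w = \<infinity>} = space N - (\<Union>k. {w\<in>space N. Mstar w = enat k})"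
      by (auto simp: not_infinity_eq)
    have "measure N (\<Union>k. {w\<in>space N. Mstar w = enat k}) = 0" using U by (simp add: N.emeasure_eq_measure)
    then show ?thesis unfolding eq using N.prob_compl[OF Uev] by simp
  qed
qed

end
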